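(* Let $q$ be a prime power, $2\le k\le n$, and let $\mathcal{C} \subseteq \mathbb{F}_q^n$ be a linear code of dimension $k$. Then $$\mathbb{E}[\mathcal{C}] = nH_n - \sum_{s=k}^{n-1} \frac{\alpha(\mathcal{C},s)}{\binom{n-1}{s}}.$$
   Context: $H_m = \sum_{i=1}^m 1/i$ is the $m$-th harmonic number ($H_0=0$). For a linear code $\mathcal{C}\subseteq\mathbb{F}_q^n$ of dimension $k$, $\mathbb{E}[\mathcal{C}]$ is $\mathbb{E}[G]$ for any generator matrix $G\in\mathbb{F}_q^{k\times n}$ of $\mathcal{C}$, where $\mathbb{E}[G]$ is the expected number of draws when columns of $G$ are drawn independently and uniformly at random from its $n$ columns (with repetition) until the drawn columns span $\mathbb{F}_q^k$; this does not depend on $G$. Writing $g_j$ for the $j$-th column of a generator matrix $G$ of $\mathcal{C}$, for $0\le s\le n$ let $\alpha(\mathcal{C},s) = |\{S\subseteq\{1,\dots,n\} : |S|=s,\ \langle g_j : j\in S\rangle = \mathbb{F}_q^k\}|$, the number of information sets of $\mathcal{C}$ of size $s$ (independent of the choice of $G$). *)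

theory Defs
  imports Complex_Main "HOL-Analysis.Harmonic_Numbers"
begin

text \<open>A k x n matrix G over a finite field 'a is a function G i j (row i < k, column j < n).
  Vectors of F_q^k are functions v :: nat \<Rightarrow> 'a, only coordinates i < k matter.\<close>

definition col :: "(nat \<Rightarrow> nat \<Rightarrow> 'a) \<Rightarrow> nat \<Rightarrow> nat \<Rightarrow> 'a" where
  "col G j = (\<lambda>i. G i j)"

definition spans :: "nat \<Rightarrow> (nat \<Rightarrow> nat \<Rightarrow> 'a::field) \<Rightarrow> nat set \<Rightarrow> bool" where
  "spans k G S \<longleftrightarrow>
     (\<forall>v :: nat \<Rightarrow> 'a. \<exists>c :: nat \<Rightarrow> 'a. \<forall>i<k. v i = (\<Sum>j\<in>S. c j * col G j i))"

text \<open>Probability that the stopping time T (number of uniform draws, with repetition, from the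
  n columns until the drawn columns span F_q^k) equals t.\<close>
definition stop_prob :: "nat \<Rightarrow> nat \<Rightarrow> (nat \<Rightarrow> nat \<Rightarrow> 'a::field) \<Rightarrow> nat \<Rightarrow> real" where
  "stop_prob k n G t =
     real (card {xs. length xs = t \<and> set xs \<subseteq> {0..<n} \<and>
                    spans k G (set xs) \<and> \<not> spans k G (set (butlast xs))}) / real n ^ t"

definition expected_draws :: "nat \<Rightarrow> nat \<Rightarrow> (nat \<Rightarrow> nat \<Rightarrow> 'a::field) \<Rightarrow> real" where
  "expected_draws k n G = (\<Sum>t. real t * stop_prob k n G t)"

definition alpha :: "nat \<Rightarrow> nat \<Rightarrow> (nat \<Rightarrow> nat \<Rightarrow> 'a::field) \<Rightarrow> nat \<Rightarrow> nat" where
  "alpha k n G s = card {S. S \<subseteq> {0..<n} \<and> card S = s \<and> spans k G S}"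

end

theory Submission
  imports Defs "HOL-Library.FuncSet"
begin


lemma spans_mono:
  assumes "finite T" "S \<subseteq> T" "spans k G S"
  shows "spans k G T"
  unfolding spans_def
proof
  fix v :: "nat \<Rightarrow> 'a"
  obtain c where c: "\<forall>i<k. v i = (\<Sum>j\<in>S. c j * col G j i)" using assms(3) unfolding spans_def by blast
  have "\<forall>i<k. v i = (\<Sum>j\<in>T. (if j \<in> S then c j else 0) * col G j i)"
  proof (intro allI impI)
    fix i assume "i < k"
    have "(\<Sum>j\<in>T. (if j \<in> S then c j else 0) * col G j i) = (\<Sum>j\<in>T. if j \<in> S then c j * col G j i else 0)"
      by (rule sum.cong) auto
    also have "\<dots> = (\<Sum>j\<in>{j\<in>T. j \<in> S}. c j * col G j i)"
      using sum.inter_filter[OF assms(1), of "\<lambda>j. c j * col G j i" "\<lambda>j. j \<in> S"] by simp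
    also have "{j\<in>T. j \<in> S} = S" using assms(2) by blast
    finally show "v i = (\<Sum>j\<in>T. (if j \<in> S then c j else 0) * col G j i)" using c \<open>i<k\<close> by simp
  qed
  then show "\<exists>c. \<forall>i<k. v i = (\<Sum>j\<in>T. c j * col G j i)" by (rule exI[of _ "\<lambda>j. if j \<in> S then c j else 0"])
qed

lemma spans_empty: "0 < k \<Longrightarrow> \<not> spans k (G :: nat \<Rightarrow> nat \<Rightarrow> 'a::field) {}"
  unfolding spans_def by (auto intro!: exI[of _ "\<lambda>_. 1"])

lemma spans_card:
  fixes G :: "nat \<Rightarrow> nat \<Rightarrow> 'a::{finite,field}"
  assumes "finite S" "spans k G S"
  shows "k \<le> card S"
proof -
  define h where "h = (\<lambda>c::nat \<Rightarrow> 'a. (\<lambda>i. if i < k then (\<Sum>j\<in>S. c j * col G j i) else undefined))"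
  have sub: "PiE {..<k} (\<lambda>_. UNIV) \<subseteq> h ` PiE S (\<lambda>_. (UNIV :: 'a set))"
  proof
    fix v :: "nat \<Rightarrow> 'a" assume v: "v \<in> PiE {..<k} (\<lambda>_. UNIV)"
    obtain c where c: "\<forall>i<k. v i = (\<Sum>j\<in>S. c j * col G j i)" using assms(2) unfolding spans_def by blast
    have "h (restrict c S) = v"
    proof
      fix i show "h (restrict c S) i = v i"
        using v c by (auto simp: h_def PiE_def extensional_def)
    qed
    moreover have "restrict c S \<in> PiE S (\<lambda>_. UNIV)" by simp
    ultimately show "v \<in> h ` PiE S (\<lambda>_. UNIV)" by blast
  qed
  have "CARD('a) ^ k = card (PiE {..<k} (\<lambda>_. (UNIV::'a set)))" by (simp add: card_PiE)
  also have "\<dots> \<le> card (h ` PiE S (\<lambda>_. (UNIV :: 'a set)))"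
    by (rule card_mono[OF _ sub]) (simp add: assms(1) finite_PiE)
  also have "\<dots> \<le> card (PiE S (\<lambda>_. (UNIV :: 'a set)))"
    by (rule card_image_le) (simp add: assms(1) finite_PiE)
  also have "\<dots> = CARD('a) ^ card S" using assms(1) by (simp add: card_PiE)
  finally have le: "CARD('a) ^ k \<le> CARD('a) ^ card S" .
  have "card {0::'a, 1} \<le> CARD('a)" by (rule card_mono) auto
  then have "2 \<le> CARD('a)" by simp
  then show ?thesis using le power_le_imp_le_exp by (metis Suc_1 Suc_le_lessD)
qed

fun sj :: "nat \<Rightarrow> nat \<Rightarrow> nat" where
  "sj 0 s = (if s = 0 then 1 else 0)"
| "sj (Suc t) s = s * (sj t s + sj t (s - 1))"

lemma finite_seteq: "finite S \<Longrightarrow> finite {xs. length xs = t \<and> set xs = S}"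
  by (rule finite_subset[OF _ finite_lists_length_eq[of S t]]) auto

lemma card_seteq:
  assumes "finite S"
  shows "card {xs. length xs = t \<and> set xs = S} = sj t (card S)"
  using assms
proof (induction t arbitrary: S)
  case 0
  then show ?case by (cases "S = {}") auto
next
  case (Suc t)
  define B where "B = (\<lambda>x. {ys. length ys = t \<and> set ys = S} \<union> {ys. length ys = t \<and> set ys = S - {x}})"
  have eq: "{xs. length xs = Suc t \<and> set xs = S} = (\<lambda>(x,ys). x # ys) ` (SIGMA x:S. B x)"
  proof (intro equalityI subsetI)
    fix xs assume "xs \<in> {xs. length xs = Suc t \<and> set xs = S}"
    then obtain x ys where xs: "xs = x # ys" "length ys = t" "insert x (set ys) = S"
      by (cases xs) auto
    then have "set ys = S \<or> set ys = S - {x}" by auto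
    then have "(x, ys) \<in> (SIGMA x:S. B x)" using xs by (auto simp: B_def)
    then show "xs \<in> (\<lambda>(x,ys). x # ys) ` (SIGMA x:S. B x)" using xs by force
  next
    fix xs assume "xs \<in> (\<lambda>(x,ys). x # ys) ` (SIGMA x:S. B x)"
    then obtain x ys where xs: "xs = x # ys" "x \<in> S" "ys \<in> B x" by auto
    then have "length ys = t" "set ys = S \<or> set ys = S - {x}" by (auto simp: B_def)
    then show "xs \<in> {xs. length xs = Suc t \<and> set xs = S}" using xs(1,2) by auto
  qed
  have inj: "inj_on (\<lambda>(x,ys). x # ys) (SIGMA x:S. B x)" by (auto simp: inj_on_def)
  have cB: "card (B x) = sj t (card S) + sj t (card S - 1)" if "x \<in> S" for x
  proof -
    have "card (B x) = card {ys. length ys = t \<and> set ys = S} + card {ys. length ys = t \<and> set ys = S - {x}}"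
      unfolding B_def using that Suc.prems by (intro card_Un_disjoint finite_seteq) auto
    then show ?thesis using Suc.IH[of S] Suc.IH[of "S - {x}"] Suc.prems that by simp
  qed
  have fB: "finite (B x)" for x using Suc.prems by (simp add: B_def finite_seteq)
  have "card {xs. length xs = Suc t \<and> set xs = S} = card (SIGMA x:S. B x)"
    unfolding eq by (rule card_image[OF inj])
  also have "\<dots> = (\<Sum>x\<in>S. card (B x))" using Suc.prems fB by (simp add: card_SigmaI)
  also have "\<dots> = (\<Sum>x\<in>S. sj t (card S) + sj t (card S - 1))" by (rule sum.cong) (auto simp: cB)
  finally show ?case by simp
qed

lemma sj_le: "sj t s \<le> s ^ t"
proof -
  have "sj t s = card {xs. length xs = t \<and> set xs = {0..<s}}" by (simp add: card_seteq)
  also have "\<dots> \<le> card {xs. set xs \<subseteq> {0..<s} \<and> length xs = t}"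
    by (rule card_mono[OF finite_lists_length_eq]) auto
  also have "\<dots> = s ^ t" by (simp add: card_lists_length_eq)
  finally show ?thesis .
qed

lemma sj_summable:
  assumes "s < n"
  shows "summable (\<lambda>t. real (sj t s) / real n ^ t)"
proof (rule summable_comparison_test')
  show "summable (\<lambda>t. (real s / real n) ^ t)" using assms by (intro summable_geometric) simp
  fix t show "norm (real (sj t s) / real n ^ t) \<le> (real s / real n) ^ t"
    using sj_le[of t s] by (simp add: power_divide divide_right_mono)
qed

lemma binom_step: "s < n \<Longrightarrow> real (Suc s) * real ((n - 1) choose Suc s) = real (n - 1 - s) * real ((n - 1) choose s)"
proof -
  assume "s < n"
  have "Suc s * ((n - 1) choose Suc s) = (n - 1 - s) * ((n - 1) choose s)"
    using times_binomial_minus1_eq[of "Suc s" "n - 1"] binomial_absorb_comp[of "n - 1" s] by simp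
  then show ?thesis by (metis of_nat_mult)
qed

lemma sj_sums:
  assumes "s < n"
  shows "(\<lambda>t. real (sj t s) / real n ^ t) sums (1 / real ((n - 1) choose s))"
  using assms
proof (induction s)
  case 0
  have "(\<lambda>t. real (sj t 0) / real n ^ t) = (\<lambda>t. if t = 0 then 1 else 0)"
  proof
    fix t show "real (sj t 0) / real n ^ t = (if t = 0 then 1 else 0)" by (cases t) auto
  qed
  then show ?case using sums_single[of 0 "\<lambda>_. 1 :: real"] by simp
next
  case (Suc s)
  let ?f = "\<lambda>t. real (sj t (Suc s)) / real n ^ t"
  let ?g = "\<lambda>t. real (sj t s) / real n ^ t"
  define a where "a = suminf ?f"
  define b where "b = 1 / real ((n - 1) choose s)"
  have n0: "real n > 0" using Suc.prems by simp
  have fa: "?f sums a" unfolding a_def using sj_summable[OF Suc.prems] by (simp add: summable_sums)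
  have gb: "?g sums b" unfolding b_def using Suc.IH Suc.prems by simp
  have "(\<lambda>t. real (Suc s) / real n * (?f t + ?g t)) sums (real (Suc s) / real n * (a + b))"
    by (intro sums_mult sums_add fa gb)
  moreover have "(\<lambda>t. real (Suc s) / real n * (?f t + ?g t)) = (\<lambda>t. ?f (Suc t))"
  proof
    fix t
    have "?f (Suc t) = real (Suc s) * (real (sj t (Suc s)) + real (sj t s)) / (real n * real n ^ t)"
      by (simp add: algebra_simps)
    also have "\<dots> = real (Suc s) / real n * ((real (sj t (Suc s)) + real (sj t s)) / real n ^ t)"
      by (simp only: times_divide_times_eq)
    also have "\<dots> = real (Suc s) / real n * (?f t + ?g t)" by (simp only: add_divide_distrib)
    finally show "real (Suc s) / real n * (?f t + ?g t) = ?f (Suc t)" by simp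
  qed
  ultimately have "(\<lambda>t. ?f (Suc t)) sums (real (Suc s) / real n * (a + b))" by simp
  then have "?f sums (real (Suc s) / real n * (a + b) + ?f 0)" by (rule sums_Suc_iff[THEN iffD1])
  moreover have "?f 0 = 0" by simp
  ultimately have "?f sums (real (Suc s) / real n * (a + b))" by simp
  then have a1: "a = real (Suc s) / real n * (a + b)" by (rule sums_unique2[OF fa])
  have "a * real n = real (Suc s) * (a + b)" using n0 by (subst a1) simp
  then have eq: "a * (real n - real (Suc s)) = real (Suc s) * b" by (simp add: algebra_simps)
  have bs: "real (Suc s) * real ((n - 1) choose Suc s) = real (n - 1 - s) * real ((n - 1) choose s)"
    using binom_step Suc.prems by simp
  have pos: "real ((n - 1) choose Suc s) > 0" "real ((n - 1) choose s) > 0" using Suc.prems by auto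
  have nm: "real n - real (Suc s) = real (n - 1 - s)" using Suc.prems by auto
  have e2: "a * real (n - 1 - s) = real (Suc s) * b" using eq unfolding nm .
  have "a * (real (Suc s) * real ((n - 1) choose Suc s)) = a * real (n - 1 - s) * real ((n - 1) choose s)"
    unfolding bs by (simp only: mult.assoc)
  also have "\<dots> = real (Suc s) * b * real ((n - 1) choose s)" unfolding e2 ..
  also have "\<dots> = real (Suc s)" unfolding b_def using pos by simp
  finally have "a * (real (Suc s) * real ((n - 1) choose Suc s)) = real (Suc s)" .
  then have "a * real ((n - 1) choose Suc s) = 1"
  proof -
    have "real (Suc s) * (a * real ((n - 1) choose Suc s)) = real (Suc s) * 1"
      using \<open>a * (real (Suc s) * real ((n - 1) choose Suc s)) = real (Suc s)\<close> by (simp add: algebra_simps)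
    then show ?thesis by (subst (asm) mult_cancel_left) simp
  qed
  then have "a = 1 / real ((n - 1) choose Suc s)" using pos by (simp add: field_simps)
  with fa show ?case by simp
qed



lemma tele:
  fixes q f :: "nat \<Rightarrow> real"
  assumes qs: "q sums L" and qb: "\<And>t. \<bar>q t\<bar> \<le> C * r ^ t" and r: "0 \<le> r" "r < 1"
    and f0: "f 0 = 0" and fS: "\<And>t. f (Suc t) = real (Suc t) * (q t - q (Suc t))"
  shows "f sums L"
proof -
  have part: "(\<Sum>t<Suc T. f t) = (\<Sum>t<T. q t) - real T * q T" for T
  proof (induction T)
    case 0 then show ?case using f0 by simp
  next
    case (Suc T)
    have "(\<Sum>t<Suc (Suc T). f t) = (\<Sum>t<Suc T. f t) + f (Suc T)" by simp
    also have "\<dots> = (\<Sum>t<T. q t) - real T * q T + real (Suc T) * (q T - q (Suc T))"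
      using Suc.IH fS by simp
    also have "\<dots> = (\<Sum>t<Suc T. q t) - real (Suc T) * q (Suc T)"
      by (simp add: algebra_simps)
    finally show ?case .
  qed
  have l1: "(\<lambda>T. \<Sum>t<T. q t) \<longlonglongrightarrow> L" using qs by (simp add: sums_def)
  have l0: "(\<lambda>T. C * (real T * r ^ T)) \<longlonglongrightarrow> 0"
    using tendsto_mult_right_zero[OF powser_times_n_limit_0[of r]] r by simp
  have l2: "(\<lambda>T. real T * q T) \<longlonglongrightarrow> 0"
  proof (rule Lim_null_comparison[OF _ l0], rule always_eventually, rule allI)
    fix T
    have "norm (real T * q T) = real T * \<bar>q T\<bar>" by (simp add: abs_mult)
    also have "\<dots> \<le> real T * (C * r ^ T)" by (rule mult_left_mono[OF qb]) simp
    finally show "norm (real T * q T) \<le> C * (real T * r ^ T)" by (simp add: algebra_simps)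
  qed
  have "(\<lambda>T. (\<Sum>t<T. q t) - real T * q T) \<longlonglongrightarrow> L - 0" by (intro tendsto_diff l1 l2)
  then have "(\<lambda>T. \<Sum>t<Suc T. f t) \<longlonglongrightarrow> L" unfolding part by simp
  then have "(\<lambda>T. \<Sum>t<T. f t) \<longlonglongrightarrow> L" by (rule LIMSEQ_imp_Suc)
  then show ?thesis by (simp add: sums_def)
qed



definition Fset :: "nat \<Rightarrow> nat \<Rightarrow> (nat \<Rightarrow> nat \<Rightarrow> 'a::field) \<Rightarrow> nat \<Rightarrow> nat list set" where
  "Fset k n G t = {xs. length xs = t \<and> set xs \<subseteq> {0..<n} \<and> \<not> spans k G (set xs)}"

definition Nset :: "nat \<Rightarrow> nat \<Rightarrow> (nat \<Rightarrow> nat \<Rightarrow> 'a::field) \<Rightarrow> nat set set" where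
  "Nset k n G = {S. S \<subseteq> {0..<n} \<and> \<not> spans k G S}"

lemma finite_Fset: "finite (Fset k n G t)"
  unfolding Fset_def by (rule finite_subset[OF _ finite_lists_length_eq[of "{0..<n}" t]]) auto

lemma finite_Nset: "finite (Nset k n G)"
  unfolding Nset_def by (rule finite_subset[of _ "Pow {0..<n}"]) auto

lemma Fset_card: "card (Fset k n G t) = (\<Sum>S\<in>Nset k n G. sj t (card S))"
proof -
  have eq: "Fset k n G t = (\<Union>S\<in>Nset k n G. {xs. length xs = t \<and> set xs = S})"
    unfolding Fset_def Nset_def by auto
  have "card (Fset k n G t) = (\<Sum>S\<in>Nset k n G. card {xs. length xs = t \<and> set xs = S})"
    unfolding eq
  proof (rule card_UN_disjoint[OF finite_Nset])
    show "\<forall>S\<in>Nset k n G. finite {xs. length xs = t \<and> set xs = S}"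
      unfolding Nset_def by (auto intro!: finite_seteq dest: finite_subset[OF _ finite_atLeastLessThan])
    show "\<forall>S\<in>Nset k n G. \<forall>S'\<in>Nset k n G. S \<noteq> S' \<longrightarrow>
      {xs. length xs = t \<and> set xs = S} \<inter> {xs. length xs = t \<and> set xs = S'} = {}" by auto
  qed
  also have "\<dots> = (\<Sum>S\<in>Nset k n G. sj t (card S))"
    by (rule sum.cong[OF refl]) (auto simp: Nset_def intro!: card_seteq dest: finite_subset[OF _ finite_atLeastLessThan])
  finally show ?thesis .
qed

lemma stop_zero:
  assumes "0 < k"
  shows "{xs. length xs = 0 \<and> set xs \<subseteq> {0..<n} \<and> spans k G (set xs) \<and> \<not> spans k G (set (butlast xs))} = {}"
  using spans_empty[OF assms, of G] by auto

lemma stop_card: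
  fixes G :: "nat \<Rightarrow> nat \<Rightarrow> 'a::field"
  shows "real (card {xs. length xs = Suc t \<and> set xs \<subseteq> {0..<n} \<and> spans k G (set xs) \<and> \<not> spans k G (set (butlast xs))})
     = real n * real (card (Fset k n G t)) - real (card (Fset k n G (Suc t)))"
proof -
  define St where "St = {xs. length xs = Suc t \<and> set xs \<subseteq> {0..<n} \<and> spans k G (set xs) \<and> \<not> spans k G (set (butlast xs))}"
  define B where "B = {xs. length xs = Suc t \<and> set xs \<subseteq> {0..<n} \<and> \<not> spans k G (set (butlast xs))}"
  have mono: "\<not> spans k G (set (butlast xs))" if "\<not> spans k G (set xs)" for xs
  proof
    assume "spans k G (set (butlast xs))"
    then have "spans k G (set xs)" by (rule spans_mono[rotated 2]) (auto dest: in_set_butlastD)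
    then show False using that by simp
  qed
  have BU: "B = St \<union> Fset k n G (Suc t)" unfolding B_def St_def Fset_def using mono by auto
  have disj: "St \<inter> Fset k n G (Suc t) = {}" unfolding St_def Fset_def by auto
  have fB: "finite B" unfolding B_def
    by (rule finite_subset[OF _ finite_lists_length_eq[of "{0..<n}" "Suc t"]]) auto
  have Bimg: "B = (\<lambda>(ys, x). ys @ [x]) ` (Fset k n G t \<times> {0..<n})"
  proof (intro equalityI subsetI)
    fix xs assume xs: "xs \<in> B"
    then have ne: "xs \<noteq> []" unfolding B_def by auto
    then have xe: "xs = butlast xs @ [last xs]" by simp
    have "butlast xs \<in> Fset k n G t" using xs unfolding B_def Fset_def by (auto dest: in_set_butlastD)
    moreover have "last xs < n" using xs ne unfolding B_def by (auto dest!: last_in_set)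
    ultimately have "(butlast xs, last xs) \<in> Fset k n G t \<times> {0..<n}" by simp
    then show "xs \<in> (\<lambda>(ys, x). ys @ [x]) ` (Fset k n G t \<times> {0..<n})"
      using xe by (metis (no_types, lifting) case_prod_conv image_eqI)
  next
    fix xs assume "xs \<in> (\<lambda>(ys, x). ys @ [x]) ` (Fset k n G t \<times> {0..<n})"
    then obtain ys x where "xs = ys @ [x]" "ys \<in> Fset k n G t" "x < n" by auto
    then show "xs \<in> B" unfolding B_def Fset_def by auto
  qed
  have inj: "inj_on (\<lambda>(ys, x). ys @ [x]) (Fset k n G t \<times> {0..<n})"
    by (auto simp: inj_on_def)
  have "card B = card (Fset k n G t) * n"
    unfolding Bimg by (simp add: card_image[OF inj] card_cartesian_product)
  moreover have "card B = card St + card (Fset k n G (Suc t))"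
    unfolding BU by (rule card_Un_disjoint) (use fB BU disj in auto)
  ultimately have "card St + card (Fset k n G (Suc t)) = n * card (Fset k n G t)" by simp
  then have "real (card St) + real (card (Fset k n G (Suc t))) = real n * real (card (Fset k n G t))"
    by (metis of_nat_add of_nat_mult)
  then show ?thesis unfolding St_def[symmetric] by linarith
qed




lemma alpha_small:
  fixes G :: "nat \<Rightarrow> nat \<Rightarrow> 'a::{finite,field}"
  assumes "s < k"
  shows "alpha k n G s = 0"
proof -
  have "{S. S \<subseteq> {0..<n} \<and> card S = s \<and> spans k G S} = {}"
  proof (rule ccontr)
    assume "{S. S \<subseteq> {0..<n} \<and> card S = s \<and> spans k G S} \<noteq> {}"
    then obtain S where S: "S \<subseteq> {0..<n}" "card S = s" "spans k G S" by blast
    have "finite S" using S(1) finite_subset by blast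
    then have "k \<le> card S" using spans_card S(3) by blast
    then show False using S(2) assms by simp
  qed
  then show ?thesis unfolding alpha_def by simp
qed

lemma harm_rev: "(\<Sum>s<n. 1 / real (n - s)) = harm n"
proof -
  have "(\<Sum>s<n. 1 / real (n - s)) = (\<Sum>s<n. inverse (real (Suc s)))"
    by (rule sum.reindex_bij_witness[of _ "\<lambda>s. n - 1 - s" "\<lambda>s. n - 1 - s"])
       (auto simp: Suc_diff_Suc divide_inverse)
  then show ?thesis by (simp add: harm_altdef)
qed

lemma comb:
  fixes G :: "nat \<Rightarrow> nat \<Rightarrow> 'a::{finite,field}"
  assumes full: "spans k G {0..<n}" and "0 < k" "k \<le> n"
  shows "(\<Sum>S\<in>Nset k n G. 1 / real ((n - 1) choose card S))
     = real n * harm n - (\<Sum>s=k..n-1. real (alpha k n G s) / real ((n - 1) choose s))"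
proof -
  define N where "N = Nset k n G"
  have n0: "0 < n" using assms by simp
  have lt: "card S < n" if "S \<in> N" for S
  proof -
    have "S \<subseteq> {0..<n}" "S \<noteq> {0..<n}" using that full unfolding N_def Nset_def by auto
    then have "S \<subset> {0..<n}" by blast
    then have "card S < card {0..<n}" by (rule psubset_card_mono[OF finite_atLeastLessThan])
    then show ?thesis by simp
  qed
  have cnt: "card {S\<in>N. card S = s} + alpha k n G s = n choose s" for s
  proof -
    define A where "A = {S\<in>N. card S = s}"
    define B where "B = {S. S \<subseteq> {0..<n} \<and> card S = s \<and> spans k G S}"
    have eq: "{S. S \<subseteq> {0..<n} \<and> card S = s} = A \<union> B"
      unfolding N_def Nset_def A_def B_def by auto
    have fin: "finite {S. S \<subseteq> {0..<n} \<and> card S = s}"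
      by (rule finite_subset[of _ "Pow {0..<n}"]) auto
    have "card (A \<union> B) = card A + card B"
      by (rule card_Un_disjoint) (use fin eq in \<open>auto simp: A_def B_def N_def Nset_def\<close>)
    then have "card {S. S \<subseteq> {0..<n} \<and> card S = s} = card {S\<in>N. card S = s} + alpha k n G s"
      unfolding alpha_def eq by (simp add: A_def B_def)
    then show ?thesis using n_subsets[of "{0..<n}" s] by simp
  qed
  have "(\<Sum>S\<in>N. 1 / real ((n - 1) choose card S))
      = (\<Sum>s<n. \<Sum>S\<in>{S\<in>N. card S = s}. 1 / real ((n - 1) choose card S))"
    by (rule sum.group[symmetric]) (use lt in \<open>auto simp: N_def finite_Nset\<close>)
  also have "\<dots> = (\<Sum>s<n. real (card {S\<in>N. card S = s}) / real ((n - 1) choose s))"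
    by (rule sum.cong[OF refl]) simp
  also have "\<dots> = (\<Sum>s<n. (real (n choose s) - real (alpha k n G s)) / real ((n - 1) choose s))"
    by (rule sum.cong[OF refl]) (simp add: cnt[symmetric])
  also have "\<dots> = (\<Sum>s<n. real (n choose s) / real ((n - 1) choose s)) - (\<Sum>s<n. real (alpha k n G s) / real ((n - 1) choose s))"
    by (simp add: diff_divide_distrib sum_subtractf)
  also have "(\<Sum>s<n. real (n choose s) / real ((n - 1) choose s)) = (\<Sum>s<n. real n * (1 / real (n - s)))"
  proof (rule sum.cong[OF refl])
    fix s assume "s \<in> {..<n}"
    then have s: "s < n" by simp
    have "real (n - s) * real (n choose s) = real n * real ((n - 1) choose s)"
      using binomial_absorb_comp[of n s] by (metis of_nat_mult)
    moreover have "real ((n - 1) choose s) > 0" "real (n - s) > 0" using s by auto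
    ultimately show "real (n choose s) / real ((n - 1) choose s) = real n * (1 / real (n - s))"
      by (simp add: field_simps)
  qed
  also have "\<dots> = real n * harm n" by (simp only: sum_distrib_left[symmetric] harm_rev)
  also have "(\<Sum>s<n. real (alpha k n G s) / real ((n - 1) choose s)) = (\<Sum>s=k..n-1. real (alpha k n G s) / real ((n - 1) choose s))"
    by (rule sum.mono_neutral_right) (use n0 in \<open>auto simp: alpha_small\<close>)
  finally show ?thesis unfolding N_def .
qed




theorem mainTheorem3:
  fixes G :: "nat \<Rightarrow> nat \<Rightarrow> 'a::{finite, field}" and k n :: nat
  assumes "2 \<le> k" and "k \<le> n"
    and "spans k G {0..<n}"
  shows "expected_draws k n G =
           real n * harm n - (\<Sum>s=k..n-1. real (alpha k n G s) / real ((n - 1) choose s))"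
proof -
  define N where "N = Nset k n G"
  have k0: "0 < k" using assms by simp
  have n0: "0 < n" using assms by simp
  have lt: "card S < n" if "S \<in> N" for S
  proof -
    have "S \<subseteq> {0..<n}" "S \<noteq> {0..<n}" using that assms(3) unfolding N_def Nset_def by auto
    then have "S \<subset> {0..<n}" by blast
    then have "card S < card {0..<n}" by (rule psubset_card_mono[OF finite_atLeastLessThan])
    then show ?thesis by simp
  qed
  define p where "p t = real (card (Fset k n G t)) / real n ^ t" for t
  have p_eq: "p = (\<lambda>t. \<Sum>S\<in>N. real (sj t (card S)) / real n ^ t)"
  proof
    fix t show "p t = (\<Sum>S\<in>N. real (sj t (card S)) / real n ^ t)"
      unfolding p_def Fset_card N_def by (simp add: sum_divide_distrib)
  qed
  have psums: "p sums (\<Sum>S\<in>N. 1 / real ((n - 1) choose card S))"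
    unfolding p_eq by (rule sums_sum) (rule sj_sums[OF lt])
  define r where "r = real (n - 1) / real n"
  have r: "0 \<le> r" "r < 1" unfolding r_def using n0 by auto
  have pb: "\<bar>p t\<bar> \<le> real (card N) * r ^ t" for t
  proof -
    have "\<bar>p t\<bar> = p t" unfolding p_def by simp
    also have "\<dots> \<le> (\<Sum>S\<in>N. r ^ t)" unfolding p_eq
    proof (rule sum_mono)
      fix S assume S: "S \<in> N"
      have "sj t (card S) \<le> card S ^ t" by (rule sj_le)
      also have "\<dots> \<le> (n - 1) ^ t" using lt[OF S] by (intro power_mono) auto
      finally have "real (sj t (card S)) \<le> real (n - 1) ^ t" by (metis of_nat_le_iff of_nat_power)
      then have "real (sj t (card S)) / real n ^ t \<le> real (n - 1) ^ t / real n ^ t"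
        by (rule divide_right_mono) simp
      then show "real (sj t (card S)) / real n ^ t \<le> r ^ t" unfolding r_def by (simp add: power_divide)
    qed
    also have "\<dots> = real (card N) * r ^ t" by simp
    finally show ?thesis .
  qed
  define f where "f t = real t * stop_prob k n G t" for t
  have f0: "f 0 = 0" unfolding f_def by simp
  have fS: "f (Suc t) = real (Suc t) * (p t - p (Suc t))" for t
  proof -
    have "stop_prob k n G (Suc t) = (real n * real (card (Fset k n G t)) - real (card (Fset k n G (Suc t)))) / real n ^ Suc t"
      unfolding stop_prob_def stop_card ..
    also have "\<dots> = real n * real (card (Fset k n G t)) / (real n * real n ^ t) - p (Suc t)"
      unfolding p_def by (simp only: diff_divide_distrib power_Suc)
    also have "real n * real (card (Fset k n G t)) / (real n * real n ^ t) = p t"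
      unfolding p_def using n0 by (simp only: mult_divide_mult_cancel_left_if) simp
    finally show ?thesis unfolding f_def by simp
  qed
  have "f sums (\<Sum>S\<in>N. 1 / real ((n - 1) choose card S))"
    by (rule tele[OF psums pb r f0 fS])
  then have "expected_draws k n G = (\<Sum>S\<in>N. 1 / real ((n - 1) choose card S))"
    unfolding expected_draws_def f_def by (rule sums_unique[symmetric])
  also have "\<dots> = real n * harm n - (\<Sum>s=k..n-1. real (alpha k n G s) / real ((n - 1) choose s))"
    unfolding N_def by (rule comb[OF assms(3) k0 assms(2)])
  finally show ?thesis .
qed


end
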